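(* Let $T=\mathrm{diag}(t_1,t_2,t_3)$ be a real diagonal $3\times 3$ matrix with $t_1t_2t_3\neq 0$, and let $\boldsymbol v\in\mathbb{R}^3$ be any nonzero vector. Then \[ \int_{\{\boldsymbol n\in S^2:\ \boldsymbol n\cdot\boldsymbol v\geq 0\}} \frac{\boldsymbol n}{(\boldsymbol n^\intercal T^{-2}\boldsymbol n)^{2}}\,\mathrm{d}^2\boldsymbol n \;=\; \frac{\pi\,|\det T|\, T^2\boldsymbol v}{|T\boldsymbol v|}, \] where the integral is taken componentwise.
   Context: $S^2$ denotes the unit sphere in $\mathbb{R}^3$ and $\mathrm{d}^2\boldsymbol n$ is the standard surface (area) measure on $S^2$ (in spherical coordinates $\boldsymbol n=(\sin\theta\cos\phi,\sin\theta\sin\phi,\cos\theta)$, $\mathrm{d}^2\boldsymbol n=\sin\theta\,\mathrm{d}\theta\,\mathrm{d}\phi$). $|\cdot|$ is the Euclidean norm. *)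

theory Defs
  imports "HOL-Analysis.Analysis"
begin

text \<open>Diagonal 3x3 matrix diag(t1,t2,t3) from the vector of diagonal entries.\<close>
definition diag3 :: "real^3 \<Rightarrow> real^3^3" where
  "diag3 t = (\<chi> i j. if i = j then t $ i else 0)"

text \<open>Spherical-coordinate parametrisation of the unit sphere S^2.\<close>
definition sph :: "real \<Rightarrow> real \<Rightarrow> real^3" where
  "sph \<theta> \<phi> = vector [sin \<theta> * cos \<phi>, sin \<theta> * sin \<phi>, cos \<theta>]"

text \<open>Integrand of the surface integral over A \<subseteq> S^2 of f with respect to the
  standard area measure d^2 n = sin(theta) dtheta dphi, as a function on the
  parameter rectangle [0,pi] x [0,2pi].\<close>
definition sph_integrand :: "(real^3 \<Rightarrow> real^3) \<Rightarrow> (real^3) set \<Rightarrow> real \<times> real \<Rightarrow> real^3" where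
  "sph_integrand f A = (\<lambda>(\<theta>, \<phi>). if sph \<theta> \<phi> \<in> A then sin \<theta> *\<^sub>R f (sph \<theta> \<phi>) else 0)"

end

theory Submission
  imports Defs
begin

(* ---- part A ---- *)

lemma sum3: "(\<Sum>j\<in>UNIV. f j) = f (1::3) + f 2 + f 3"
  by (rule sum_3)

lemma prod3: "(\<Prod>j\<in>UNIV. f j) = f (1::3) * f 2 * f 3"
  unfolding UNIV_3 by (simp add: ac_simps)

lemma diag3_mult: "diag3 a ** diag3 b = diag3 (\<chi> i. a$i * b$i)"
  unfolding diag3_def matrix_matrix_mult_def vec_eq_iff forall_3
  by (simp add: sum3)

lemma diag3_one: "diag3 (\<chi> i. 1) = mat 1"
  by (simp add: diag3_def mat_def vec_eq_iff)

lemma det_diag3: "det (diag3 t) = t$1 * t$2 * t$3"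
  by (subst det_diagonal) (simp_all add: diag3_def prod3)

lemma diag3_mulv: "diag3 a *v x = (\<chi> i. a$i * x$i)"
  unfolding diag3_def matrix_vector_mult_def vec_eq_iff forall_3
  by (simp add: sum3)

lemma matrix_inv_unique:
  fixes A :: "real^'n^'n"
  assumes "A ** B = mat 1" "B ** A = mat 1"
  shows "matrix_inv A = B"
proof -
  have "\<exists>A'. A ** A' = mat 1 \<and> A' ** A = mat 1" using assms by blast
  then have h: "A ** matrix_inv A = mat 1 \<and> matrix_inv A ** A = mat 1"
    unfolding matrix_inv_def by (rule someI_ex)
  have "matrix_inv A = matrix_inv A ** (A ** B)" using assms by simp
  also have "\<dots> = (matrix_inv A ** A) ** B" by (simp add: matrix_mul_assoc)
  also have "\<dots> = B" using h by simp
  finally show ?thesis .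
qed

lemma matrix_inv_diag3:
  assumes "\<forall>i. a$i \<noteq> 0"
  shows "matrix_inv (diag3 a) = diag3 (\<chi> i. 1 / a$i)"
proof -
  have "diag3 a ** diag3 (\<chi> i. 1 / a$i) = mat 1" "diag3 (\<chi> i. 1 / a$i) ** diag3 a = mat 1"
    using assms by (simp_all add: diag3_mult diag3_one[symmetric])
  then show ?thesis by (rule matrix_inv_unique)
qed

(* ---- part B ---- *)

lemma vec_nth_has_derivative[derivative_intros]: "((\<lambda>x::real^'n. x$i) has_derivative (\<lambda>h. h$i)) F"
  by (rule bounded_linear_imp_has_derivative) (rule bounded_linear_vec_nth)

definition e1 :: "real^3" where "e1 = axis 1 1"
definition e2 :: "real^3" where "e2 = axis 2 1"
definition e3 :: "real^3" where "e3 = axis 3 1"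

definition pol :: "real^3 \<Rightarrow> real^3" where
  "pol p = (p$1 * sin (p$2) * cos (p$3)) *\<^sub>R e1 + (p$1 * sin (p$2) * sin (p$3)) *\<^sub>R e2 + (p$1 * cos (p$2)) *\<^sub>R e3"

definition polD :: "real^3 \<Rightarrow> real^3 \<Rightarrow> real^3" where
  "polD p h = (h$1 * sin (p$2) * cos (p$3) + p$1 * (cos (p$2) * h$2) * cos (p$3) - p$1 * sin (p$2) * (sin (p$3) * h$3)) *\<^sub>R e1
    + (h$1 * sin (p$2) * sin (p$3) + p$1 * (cos (p$2) * h$2) * sin (p$3) + p$1 * sin (p$2) * (cos (p$3) * h$3)) *\<^sub>R e2
    + (h$1 * cos (p$2) - p$1 * (sin (p$2) * h$2)) *\<^sub>R e3"

lemma e_nth[simp]: "e1$1 = 1" "e1$2 = 0" "e1$3 = 0" "e2$1 = 0" "e2$2 = 1" "e2$3 = 0" "e3$1 = 0" "e3$2 = 0" "e3$3 = 1"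
  by (simp_all add: e1_def e2_def e3_def axis_def)

lemma pol_sph: "pol p = p$1 *\<^sub>R sph (p$2) (p$3)"
  unfolding pol_def sph_def vec_eq_iff forall_3 by (simp add: vector_def)

lemma pol_deriv: "(pol has_derivative polD p) (at p within S)"
  unfolding pol_def polD_def
  by (rule derivative_eq_intros refl | simp)+ (simp add: algebra_simps)?

lemma det_polD: "det (matrix (polD p)) = (p$1)^2 * sin (p$2)"
  unfolding det_3 matrix_def polD_def
  apply (simp add: axis_def)
  using sin_cos_squared_add[of "p$2"] sin_cos_squared_add[of "p$3"]
  by algebra

(* ---- part C ---- *)

definition S0 :: "(real^3) set" where
  "S0 = {p. 0 < p$1 \<and> 0 < p$2 \<and> p$2 < pi \<and> 0 < p$3 \<and> p$3 < 2*pi}"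

lemma pol_nth: "pol p $ 1 = p$1 * sin (p$2) * cos (p$3)" "pol p $ 2 = p$1 * sin (p$2) * sin (p$3)"
  "pol p $ 3 = p$1 * cos (p$2)"
  by (simp_all add: pol_def)

lemma pol_sq: "(pol p $ 1)^2 + (pol p $ 2)^2 + (pol p $ 3)^2 = (p$1)^2"
  apply (simp add: pol_nth power_mult_distrib)
  using sin_cos_squared_add[of "p$2"] sin_cos_squared_add[of "p$3"] by algebra

lemma eq_2pi:
  assumes "0 < x" "x < 2*pi" "0 < y" "y < 2*pi" "sin x = sin y" "cos x = cos y"
  shows "x = y"
proof -
  obtain n :: int where n: "x = y + 2 * pi * n" using assms sin_cos_eq_iff by metis
  have "\<bar>2 * pi * n\<bar> < 2 * pi" using assms n by auto
  then have "\<bar>real_of_int n\<bar> < 1" by (simp add: abs_mult)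
  then have "n = 0" by linarith
  then show ?thesis using n by simp
qed

lemma inj_pol: "inj_on pol S0"
proof (rule inj_onI)
  fix p q assume p: "p \<in> S0" and q: "q \<in> S0" and e: "pol p = pol q"
  have r: "p$1 = q$1"
    using pol_sq[of p] pol_sq[of q] e p q unfolding S0_def
    by (metis (mono_tags, lifting) mem_Collect_eq power2_eq_iff_nonneg less_eq_real_def)
  have "cos (p$2) = cos (q$2)" using e r p unfolding S0_def
    by (metis (mono_tags, lifting) mem_Collect_eq pol_nth(3) mult_left_cancel less_irrefl)
  moreover have "0 \<le> p$2" "p$2 \<le> pi" "0 \<le> q$2" "q$2 \<le> pi"
    using p q unfolding S0_def by auto
  ultimately have t: "p$2 = q$2" using cos_inj_pi by blast
  have "sin (p$2) > 0" using p unfolding S0_def by (intro sin_gt_zero) auto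
  then have sp: "p$1 * sin (p$2) \<noteq> 0" using p unfolding S0_def by auto
  have cc: "cos (p$3) = cos (q$3)" and ss: "sin (p$3) = sin (q$3)"
    using e r t sp pol_nth[of p] pol_nth[of q] by (metis mult_left_cancel mult.assoc)+
  have bb: "0 < p$3" "p$3 < 2*pi" "0 < q$3" "q$3 < 2*pi" using p q unfolding S0_def by auto
  have "p$3 = q$3" by (rule eq_2pi[OF bb ss cc])
  then show "p = q" using r t by (simp add: vec_eq_iff forall_3)
qed

lemma pol_image: "{x. x$2 \<noteq> 0} \<subseteq> pol ` S0"
proof
  fix x :: "real^3" assume "x \<in> {x. x$2 \<noteq> 0}"
  then have x2: "x$2 \<noteq> 0" by simp
  define \<rho> where "\<rho> = sqrt ((x$1)^2 + (x$2)^2)"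
  define r where "r = sqrt ((x$1)^2 + (x$2)^2 + (x$3)^2)"
  have \<rho>: "\<rho> > 0" using x2 unfolding \<rho>_def by (simp add: add_nonneg_pos)
  have r: "r > 0" using x2 unfolding r_def by (simp add: add_pos_nonneg add_nonneg_pos)
  have r2: "r^2 = (x$1)^2 + (x$2)^2 + (x$3)^2" unfolding r_def by simp
  have \<rho>2: "\<rho>^2 = (x$1)^2 + (x$2)^2" unfolding \<rho>_def by simp
  define c where "c = x$3 / r"
  have "(x$3)^2 < r^2" using r2 x2 by (simp add: add_nonneg_pos)
  then have "c^2 < 1" using r unfolding c_def by (simp add: power_divide divide_less_eq)
  then have c1: "-1 < c" "c < 1" by (auto simp: abs_square_less_1 dest: abs_square_less_1[THEN iffD1])
  define \<theta> where "\<theta> = arccos c"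
  have th: "0 < \<theta>" "\<theta> < pi" using arccos_lt_bounded[OF c1] unfolding \<theta>_def by auto
  have cth: "cos \<theta> = c" unfolding \<theta>_def using c1 by simp
  have sth: "sin \<theta> = \<rho> / r"
  proof -
    have "sin \<theta> = sqrt (1 - c^2)" unfolding \<theta>_def using c1 by (simp add: sin_arccos)
    also have "1 - c^2 = (r^2 - (x$3)^2)/r^2" using r unfolding c_def by (simp add: field_simps power_divide)
    also have "\<dots> = (\<rho>/r)^2" using r2 \<rho>2 by (simp add: power_divide)
    finally show ?thesis using \<rho> r by simp
  qed
  have "(x$1/\<rho>)^2 + (x$2/\<rho>)^2 = ((x$1)^2 + (x$2)^2)/\<rho>^2" by (simp add: power_divide add_divide_distrib)
  also have "\<dots> = 1" using \<rho> by (simp add: \<rho>2[symmetric])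
  finally have "(x$1/\<rho>)^2 + (x$2/\<rho>)^2 = 1" .
  then obtain \<phi> where ph: "0 \<le> \<phi>" "\<phi> < 2*pi" "x$1/\<rho> = cos \<phi>" "x$2/\<rho> = sin \<phi>"
    by (rule sincos_total_2pi)
  have "\<phi> \<noteq> 0" using ph x2 \<rho> by auto
  define p where "p = r *\<^sub>R e1 + \<theta> *\<^sub>R e2 + \<phi> *\<^sub>R e3"
  have pn: "p$1 = r" "p$2 = \<theta>" "p$3 = \<phi>" unfolding p_def by simp_all
  have "p \<in> S0" using r th ph \<open>\<phi> \<noteq> 0\<close> unfolding S0_def by (simp add: pn)
  moreover have "pol p = x"
  proof -
    have rr: "r * sin \<theta> = \<rho>" using r sth by simp
    have c1: "\<rho> * cos \<phi> = x$1" using \<rho> ph(3) by (metis nonzero_mult_div_cancel_left less_irrefl times_divide_eq_right)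
    have c2: "\<rho> * sin \<phi> = x$2" using \<rho> ph(4) by (metis nonzero_mult_div_cancel_left less_irrefl times_divide_eq_right)
    have c3: "r * cos \<theta> = x$3" using r cth unfolding c_def by simp
    show ?thesis unfolding vec_eq_iff forall_3 pol_nth pn using rr c1 c2 c3 by simp
  qed
  ultimately show "x \<in> pol ` S0" by blast
qed

(* ---- part D ---- *)

lemma e_distinct: "e1 \<noteq> e2" "e1 \<noteq> e3" "e2 \<noteq> e3"
  by (metis e_nth zero_neq_one)+

lemma Basis3: "(Basis :: (real^3) set) = {e1, e2, e3}"
  unfolding Basis_vec_def e1_def e2_def e3_def by (auto simp: UNIV_3)

lemma inner_e[simp]: "x \<bullet> e1 = x$1" "x \<bullet> e2 = x$2" "x \<bullet> e3 = x$3"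
  by (simp_all add: e1_def e2_def e3_def inner_axis)

lemma prod_Basis3: "(\<Prod>b\<in>(Basis::(real^3) set). f b) = f e1 * f e2 * f e3"
  by (simp add: Basis3 e_distinct mult.assoc)

definition emap :: "(real \<times> real) \<times> real \<Rightarrow> real^3" where
  "emap x = snd x *\<^sub>R e1 + fst (fst x) *\<^sub>R e2 + snd (fst x) *\<^sub>R e3"

lemma emap_nth[simp]: "emap ((a,b),c) $ 1 = c" "emap ((a,b),c) $ 2 = a" "emap ((a,b),c) $ 3 = b"
  by (simp_all add: emap_def)

lemma emap_cont: "continuous_on UNIV emap"
  unfolding emap_def by (intro continuous_intros)

lemma emap_meas[measurable]: "emap \<in> borel_measurable borel"
  by (rule borel_measurable_continuous_onI[OF emap_cont])

lemma emap_vimage_box: "emap -` box l u = ({l$2<..<u$2} \<times> {l$3<..<u$3}) \<times> {l$1<..<u$1}"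
  by (auto simp: mem_box_cart forall_3)

lemma distr_emap: "distr lborel borel emap = lborel"
proof (rule lborel_eqI[symmetric])
  fix l u :: "real^3" assume lu: "\<And>b. b \<in> Basis \<Longrightarrow> l \<bullet> b \<le> u \<bullet> b"
  then have le: "l$1 \<le> u$1" "l$2 \<le> u$2" "l$3 \<le> u$3" using inner_e by (metis Basis3 insertCI)+
  have "emeasure (distr lborel borel emap) (box l u) = emeasure lborel (emap -` box l u)"
    by (subst emeasure_distr) auto
  also have "\<dots> = emeasure (lborel \<Otimes>\<^sub>M lborel) (({l$2<..<u$2} \<times> {l$3<..<u$3}) \<times> {l$1<..<u$1})"
    by (simp add: emap_vimage_box lborel_prod)
  also have "\<dots> = emeasure lborel ({l$2<..<u$2} \<times> {l$3<..<u$3}) * emeasure lborel {l$1<..<u$1}"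
    by (rule lborel.emeasure_pair_measure_Times) (auto intro!: borel_open open_Times)
  also have "emeasure lborel ({l$2<..<u$2} \<times> {l$3<..<u$3}) = emeasure (lborel \<Otimes>\<^sub>M lborel) ({l$2<..<u$2} \<times> {l$3<..<u$3})"
    by (simp add: lborel_prod)
  also have "\<dots> = emeasure lborel {l$2<..<u$2} * emeasure lborel {l$3<..<u$3}"
    by (rule lborel.emeasure_pair_measure_Times) auto
  finally show "emeasure (distr lborel borel emap) (box l u) = ennreal (\<Prod>b\<in>Basis. (u - l) \<bullet> b)"
    using le by (simp add: prod_Basis3 ennreal_mult mult.commute mult.left_commute)
qed simp

(* ---- part E ---- *)

lemma open_S0: "open S0"
  unfolding S0_def
  by (intro open_Collect_conj open_Collect_less continuous_intros)

lemma S0_borel[measurable]: "S0 \<in> sets borel"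
  using open_S0 by (rule borel_open)

lemma S0_lebesgue: "S0 \<in> sets lebesgue"
  using S0_borel by simp

lemma pol_cont: "continuous_on UNIV pol"
  unfolding pol_def by (intro continuous_intros)

lemma pol_meas[measurable]: "pol \<in> borel_measurable borel"
  by (rule borel_measurable_continuous_onI[OF pol_cont])

lemma neg_x2: "negligible {x::real^3. x$2 = 0}"
proof -
  have "negligible {x::real^3. x \<bullet> e2 = 0}" by (rule negligible_standard_hyperplane) (simp add: Basis3)
  then show ?thesis by simp
qed

definition G3 :: "(real^3 \<Rightarrow> real^3) \<Rightarrow> real^3 \<Rightarrow> real^3" where
  "G3 F p = indicator S0 p *\<^sub>R (((p$1)^2 * sin (p$2)) *\<^sub>R F (pol p))"

lemma G3_meas[measurable]:
  assumes [measurable]: "F \<in> borel_measurable borel"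
  shows "G3 F \<in> borel_measurable borel"
  unfolding G3_def by measurable

lemma polar3:
  fixes F :: "real^3 \<Rightarrow> real^3"
  assumes Fi: "F absolutely_integrable_on UNIV" and Fm[measurable]: "F \<in> borel_measurable borel"
  shows "integrable lborel (G3 F) \<and> integral\<^sup>L lborel (G3 F) = integral UNIV F"
proof -
  have sub: "{x \<in> UNIV - pol ` S0. F x \<noteq> 0} \<subseteq> {x. x$2 = 0}" using pol_image by auto
  have n1: "negligible {x \<in> UNIV - pol ` S0. F x \<noteq> 0}" by (rule negligible_subset[OF neg_x2 sub])
  have n0: "negligible {x \<in> pol ` S0 - UNIV. F x \<noteq> 0}" by simp
  have F1: "F absolutely_integrable_on pol ` S0"
    using absolutely_integrable_spike_set_eq[OF n0 n1] Fi by simp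
  have "F integrable_on UNIV" using Fi set_lebesgue_integral_eq_integral(1) by blast
  then have "(F has_integral integral UNIV F) UNIV" by (simp add: has_integral_integral)
  then have "(F has_integral integral UNIV F) (pol ` S0)"
    using has_integral_spike_set_eq[OF n0 n1] by simp
  then have F2: "integral (pol ` S0) F = integral UNIV F" by (rule integral_unique)
  have cov: "(\<lambda>x. \<bar>det (matrix (polD x))\<bar> *\<^sub>R F (pol x)) absolutely_integrable_on S0 \<and>
        integral S0 (\<lambda>x. \<bar>det (matrix (polD x))\<bar> *\<^sub>R F (pol x)) = integral UNIV F"
    using has_absolute_integral_change_of_variables[OF S0_lebesgue pol_deriv inj_pol] F1 F2 by blast
  have eqf: "(\<lambda>x. if x \<in> S0 then \<bar>det (matrix (polD x))\<bar> *\<^sub>R F (pol x) else 0) = G3 F"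
  proof
    fix x show "(if x \<in> S0 then \<bar>det (matrix (polD x))\<bar> *\<^sub>R F (pol x) else 0) = G3 F x"
    proof (cases "x \<in> S0")
      case True
      then have "sin (x$2) > 0" unfolding S0_def by (auto intro: sin_gt_zero)
      then show ?thesis using True by (simp add: G3_def det_polD)
    qed (simp add: G3_def)
  qed
  have a0: "(\<lambda>x. if x \<in> S0 then \<bar>det (matrix (polD x))\<bar> *\<^sub>R F (pol x) else 0) absolutely_integrable_on UNIV"
    by (subst absolutely_integrable_restrict_UNIV) (rule conjunct1[OF cov])
  then have a: "G3 F absolutely_integrable_on UNIV" by (simp only: eqf)
  have b0: "integral UNIV (\<lambda>x. if x \<in> S0 then \<bar>det (matrix (polD x))\<bar> *\<^sub>R F (pol x) else 0) = integral UNIV F"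
    by (subst integral_restrict_UNIV) (rule conjunct2[OF cov])
  then have b: "integral UNIV (G3 F) = integral UNIV F" by (simp only: eqf)
  have "integrable lebesgue (G3 F)"
    using a unfolding set_integrable_def by simp
  then have c: "integrable lborel (G3 F)"
    by (subst (asm) integrable_completion) (use Fm in measurable)
  then show ?thesis using b integral_lborel[OF c] by simp
qed

definition Hp :: "(real^3 \<Rightarrow> real^3) \<Rightarrow> (real \<times> real) \<times> real \<Rightarrow> real^3" where
  "Hp F = G3 F \<circ> emap"

lemma polar:
  fixes F :: "real^3 \<Rightarrow> real^3"
  assumes Fi: "F absolutely_integrable_on UNIV" and Fm[measurable]: "F \<in> borel_measurable borel"
  shows "integrable lborel (\<lambda>y. \<integral>r. Hp F (y, r) \<partial>lborel)
       \<and> (\<integral>y. (\<integral>r. Hp F (y, r) \<partial>lborel) \<partial>lborel) = integral UNIV F"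
proof -
  have p3: "integrable lborel (G3 F)" "integral\<^sup>L lborel (G3 F) = integral UNIV F"
    using polar3[OF Fi Fm] by auto
  have i1: "integrable lborel (Hp F)"
    using p3(1) unfolding Hp_def o_def distr_emap[symmetric]
    by (subst (asm) integrable_distr_eq) auto
  have i2: "integral\<^sup>L lborel (Hp F) = integral UNIV F"
    using p3(2) unfolding Hp_def o_def distr_emap[symmetric]
    by (subst (asm) integral_distr) auto
  have i1': "integrable (lborel \<Otimes>\<^sub>M lborel) (Hp F)" using i1 by (simp add: lborel_prod)
  show ?thesis
    using lborel_pair.integrable_fst'[OF i1'] lborel_pair.integral_fst'[OF i1'] i2
    by (simp add: lborel_prod)
qed

(* ---- part G ---- *)

definition hh :: "real^3 \<Rightarrow> real^3 \<Rightarrow> real^3" where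
  "hh u y = (if u = 0 then y else y - (2 * (u \<bullet> y) / (u \<bullet> u)) *\<^sub>R u)"

lemma hh_linear: "linear (hh u)"
proof (cases "u = 0")
  case True
  have "hh u = id" by (rule ext) (simp add: hh_def True)
  then show ?thesis by (simp add: linear_id)
next
  case False
  then show ?thesis unfolding hh_def
    by (intro linearI) (auto simp: inner_add_right inner_scaleR_right algebra_simps add_divide_distrib scaleR_add_left)
qed

lemma hh_blin: "bounded_linear (hh u)"
  using hh_linear linear_conv_bounded_linear by blast

lemma hh_sym: "hh u y \<bullet> z = y \<bullet> hh u z"
  by (simp add: hh_def inner_diff_left inner_diff_right inner_commute algebra_simps)

lemma hh_invol: "hh u (hh u y) = y"
proof (cases "u = 0")
  case False
  then have "u \<bullet> u \<noteq> 0" by simp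
  then show ?thesis using False
    by (simp add: hh_def inner_diff_right algebra_simps scaleR_diff_left[symmetric] divide_simps)
qed (simp add: hh_def)

lemma hh_inner: "hh u x \<bullet> hh u y = x \<bullet> y"
  by (simp add: hh_sym hh_invol)

lemma hh_orth: "orthogonal_transformation (hh u)"
  unfolding orthogonal_transformation_def using hh_linear hh_inner by blast

lemma hh_det: "\<bar>det (matrix (hh u))\<bar> = 1"
  using hh_orth by simp

lemma hh_swap:
  assumes "norm a = 1" "norm b = 1"
  shows "hh (a - b) a = b"
proof (cases "a = b")
  case True then show ?thesis by (simp add: hh_def)
next
  case False
  have aa: "a \<bullet> a = 1" "b \<bullet> b = 1" using assms by (simp_all add: norm_eq_1)
  have "(a - b) \<bullet> (a - b) = 2 * (1 - a \<bullet> b)" using aa by (simp add: inner_diff_left inner_diff_right inner_commute)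
  moreover have "(a - b) \<bullet> a = 1 - a \<bullet> b" using aa by (simp add: inner_diff_left inner_diff_right inner_commute)
  moreover have "1 - a \<bullet> b \<noteq> 0"
  proof
    assume "1 - a \<bullet> b = 0"
    then have "(a - b) \<bullet> (a - b) = 0" using \<open>(a - b) \<bullet> (a - b) = 2 * (1 - a \<bullet> b)\<close> by simp
    then show False using False by simp
  qed
  ultimately show ?thesis using False by (simp add: hh_def)
qed

(* ---- part F ---- *)

definition Gq :: "real^3^3 \<Rightarrow> real^3 \<Rightarrow> real^3 \<Rightarrow> real^3" where
  "Gq Q w x = (if 0 \<le> x \<bullet> w \<and> x \<bullet> (Q *v x) \<le> 1 then x else 0)"

lemma sph_norm: "norm (sph a b) = 1"
proof -
  have "sph a b \<bullet> sph a b = 1"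
    apply (simp add: sph_def inner_vec_def sum_3 vector_def)
    using sin_cos_squared_add[of a] sin_cos_squared_add[of b] by algebra
  then show ?thesis by (simp add: norm_eq_1)
qed

lemma sph_nz: "sph a b \<noteq> 0"
  using sph_norm[of a b] by auto

lemma pol_emap: "pol (emap ((a,b),r)) = r *\<^sub>R sph a b"
  by (simp add: pol_sph)

lemma S0_emap: "emap ((a,b),r) \<in> S0 \<longleftrightarrow> 0 < r \<and> (a,b) \<in> box (0,0) (pi, 2*pi)"
  by (auto simp: S0_def box_def Basis_prod_def)

lemma radial_int:
  assumes "0 \<le> b"
  shows "(\<integral>r. (indicator {0..b} r * r^3) *\<^sub>R c \<partial>lborel) = (b^4/4) *\<^sub>R c"
proof -
  have int: "integrable lborel (\<lambda>r. indicator {0..b} r *\<^sub>R r^3)"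
    by (rule borel_integrable_compact) (auto intro: continuous_intros)
  have "(\<integral>r. indicator {0..b} r *\<^sub>R r^3 \<partial>lborel) = b^4/4 - 0^4/4"
  proof (rule integral_FTC_atLeastAtMost[OF assms])
    fix x show "((\<lambda>x. x^4/4) has_vector_derivative x^3) (at x within {0..b})"
      unfolding has_real_derivative_iff_has_vector_derivative[symmetric]
      by (auto intro!: derivative_eq_intros)
  qed (auto intro: continuous_intros)
  then show ?thesis using int by simp
qed

lemma Hp_Gq:
  assumes Qpos: "\<And>x. x \<noteq> 0 \<Longrightarrow> 0 < x \<bullet> (Q *v x)"
  shows "(\<integral>r. Hp (Gq Q w) ((a,b), r) \<partial>lborel) =
     (if (a,b) \<in> box (0,0) (pi, 2*pi) \<and> 0 \<le> sph a b \<bullet> w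
      then (sin a / (4 * (sph a b \<bullet> (Q *v sph a b))^2)) *\<^sub>R sph a b else 0)"
proof -
  define n where "n = sph a b"
  define q where "q = n \<bullet> (Q *v n)"
  have q: "q > 0" unfolding q_def n_def using Qpos sph_nz by blast
  have Hp_eq: "Hp (Gq Q w) ((a,b), r) = indicator S0 (emap ((a,b),r)) *\<^sub>R ((r^2 * sin a) *\<^sub>R
      (if 0 \<le> r * (n \<bullet> w) \<and> r^2 * q \<le> 1 then r *\<^sub>R n else 0))" for r
    unfolding Hp_def G3_def o_def pol_emap Gq_def q_def n_def
    by (simp add: matrix_vector_mult_scaleR power2_eq_square mult.assoc)
  show ?thesis
  proof (cases "(a,b) \<in> box (0,0) (pi, 2*pi) \<and> 0 \<le> n \<bullet> w")
    case False
    have "Hp (Gq Q w) ((a,b), r) = 0" for r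
    proof (cases "0 < r")
      case True
      then show ?thesis using False unfolding Hp_eq S0_emap
        by (auto simp: zero_le_mult_iff indicator_def S0_emap)
    qed (simp add: Hp_eq S0_emap)
    then show ?thesis using False n_def by auto
  next
    case True
    define c where "c = sqrt q"
    have c: "c > 0" "c^2 = q" unfolding c_def using q by auto
    have "Hp (Gq Q w) ((a,b), r) = (indicator {0..1/c} r * r^3) *\<^sub>R (sin a *\<^sub>R n)" for r
    proof (cases "0 < r")
      case rpos: True
      have "r^2 * q \<le> 1 \<longleftrightarrow> r \<le> 1/c"
      proof -
        have "r^2 * q = (r*c)^2" using c by (simp add: power_mult_distrib)
        also have "\<dots> \<le> 1 \<longleftrightarrow> r * c \<le> 1" using rpos c by (simp add: power_le_one_iff)
        also have "\<dots> \<longleftrightarrow> r \<le> 1/c" using c by (simp add: field_simps)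
        finally show ?thesis .
      qed
      then show ?thesis using True rpos unfolding Hp_eq S0_emap
        by (auto simp: indicator_def power3_eq_cube power2_eq_square S0_emap)
    next
      case False
      then show ?thesis unfolding Hp_eq S0_emap by (cases "r = 0") (auto simp: indicator_def S0_emap)
    qed
    then have "(\<integral>r. Hp (Gq Q w) ((a,b), r) \<partial>lborel) = ((1/c)^4/4) *\<^sub>R (sin a *\<^sub>R n)"
      using radial_int[of "1/c" "sin a *\<^sub>R n"] c by simp
    also have "(1/c)^4 = 1/q^2" using c by (simp add: power_divide flip: c(2) power_mult)
    finally show ?thesis using True unfolding n_def q_def by (simp add: field_simps)
  qed
qed

(* ---- part H ---- *)

definition Eq :: "real^3^3 \<Rightarrow> real^3 \<Rightarrow> (real^3) set" where
  "Eq Q w = {x. 0 \<le> x \<bullet> w \<and> x \<bullet> (Q *v x) \<le> 1}"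

lemma Gq_alt: "Gq Q w = (\<lambda>x. indicator (Eq Q w) x *\<^sub>R x)"
  by (auto simp: Gq_def Eq_def indicator_def fun_eq_iff)

lemma cont_quad: "continuous_on UNIV (\<lambda>x::real^3. x \<bullet> (Q *v x))"
proof -
  have "continuous_on UNIV (\<lambda>x::real^3. Q *v x)"
    using linear_continuous_on matrix_vector_mul_bounded_linear by blast
  then show ?thesis by (intro continuous_intros)
qed

lemma closed_Eq: "closed (Eq Q w)"
  unfolding Eq_def
  by (intro closed_Collect_conj closed_Collect_le continuous_intros cont_quad)

lemma Gq_meas[measurable]: "Gq Q w \<in> borel_measurable borel"
proof -
  have [measurable]: "Eq Q w \<in> sets borel" by (rule borel_closed[OF closed_Eq])
  show ?thesis unfolding Gq_alt by measurable
qed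

lemma polar_Gq:
  assumes Qpos: "\<And>x. x \<noteq> 0 \<Longrightarrow> 0 < x \<bullet> (Q *v x)"
    and Gi: "Gq Q w absolutely_integrable_on UNIV"
  shows "((\<lambda>(a,b). if 0 \<le> sph a b \<bullet> w then (sin a / (4 * (sph a b \<bullet> (Q *v sph a b))^2)) *\<^sub>R sph a b else 0)
          has_integral integral UNIV (Gq Q w)) (cbox (0,0) (pi, 2*pi))"
proof -
  let ?g = "\<lambda>(a,b). if 0 \<le> sph a b \<bullet> w then (sin a / (4 * (sph a b \<bullet> (Q *v sph a b))^2)) *\<^sub>R sph a b else 0"
  have P: "integrable lborel (\<lambda>y. \<integral>r. Hp (Gq Q w) (y, r) \<partial>lborel)"
       "(\<integral>y. (\<integral>r. Hp (Gq Q w) (y, r) \<partial>lborel) \<partial>lborel) = integral UNIV (Gq Q w)"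
    using polar[OF Gi Gq_meas] by auto
  have eq: "(\<lambda>y. \<integral>r. Hp (Gq Q w) (y, r) \<partial>lborel) = (\<lambda>y. if y \<in> box (0,0) (pi, 2*pi) then ?g y else 0)"
  proof
    fix y :: "real \<times> real"
    obtain a b where y: "y = (a,b)" by (cases y)
    show "(\<integral>r. Hp (Gq Q w) (y, r) \<partial>lborel) = (if y \<in> box (0,0) (pi, 2*pi) then ?g y else 0)"
      using Hp_Gq[OF Qpos, of w a b] unfolding y by auto
  qed
  have "((\<lambda>y. if y \<in> box (0,0) (pi, 2*pi) then ?g y else 0) has_integral integral UNIV (Gq Q w)) UNIV"
    using has_integral_integral_lborel[OF P(1)] P(2) unfolding eq by simp
  then have "(?g has_integral integral UNIV (Gq Q w)) (box (0,0) (pi, 2*pi))"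
    by (simp add: has_integral_restrict_UNIV)
  then show ?thesis by (simp add: has_integral_open_interval)
qed

(* ---- part I ---- *)

lemma sph_e: "sph a b = (sin a * cos b) *\<^sub>R e1 + (sin a * sin b) *\<^sub>R e2 + cos a *\<^sub>R e3"
  by (simp add: sph_def vec_eq_iff forall_3 vector_def)

lemma sph_inner_self: "sph a b \<bullet> sph a b = 1"
  using sph_norm[of a b] by (simp add: norm_eq_1)

lemma compact_E0: "compact (Eq (mat 1) e3)"
  unfolding compact_eq_bounded_closed
proof
  show "closed (Eq (mat 1) e3)" by (rule closed_Eq)
  have "Eq (mat 1) e3 \<subseteq> cball 0 1"
  proof
    fix x assume "x \<in> Eq (mat 1) e3"
    then have "x \<bullet> x \<le> 1" by (simp add: Eq_def)
    then have "norm x \<le> 1" by (simp add: norm_eq_sqrt_inner)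
    then show "x \<in> cball 0 1" by simp
  qed
  then show "bounded (Eq (mat 1) e3)" using bounded_cball bounded_subset by blast
qed

lemma G0_int: "Gq (mat 1) e3 absolutely_integrable_on UNIV"
proof -
  have "integrable lborel (\<lambda>x. indicator (Eq (mat 1) e3) x *\<^sub>R x)"
    by (rule borel_integrable_compact[OF compact_E0]) (rule continuous_on_id)
  then have "integrable lborel (Gq (mat 1) e3)" by (simp add: Gq_alt)
  then have "integrable lebesgue (Gq (mat 1) e3)"
    by (subst integrable_completion) measurable
  then show ?thesis unfolding set_integrable_def by simp
qed

definition k0 :: "real \<times> real \<Rightarrow> real^3" where
  "k0 x = (sin (fst x) / 4) *\<^sub>R sph (fst x) (snd x)"

lemma k0_cont: "continuous_on S k0"
  unfolding k0_def sph_e by (intro continuous_intros) auto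

lemma inner_int:
  "((\<lambda>b. k0 (a,b)) has_integral ((pi/2 * sin a * cos a) *\<^sub>R e3)) {0..2*pi}"
proof -
  define F where "F b = (sin a / 4) *\<^sub>R ((sin a * sin b) *\<^sub>R e1 + (- (sin a * cos b)) *\<^sub>R e2 + (b * cos a) *\<^sub>R e3)" for b
  have "((\<lambda>b. k0 (a,b)) has_integral (F (2*pi) - F 0)) {0..2*pi}"
  proof (rule fundamental_theorem_of_calculus)
    fix x :: real
    show "(F has_vector_derivative k0 (a, x)) (at x within {0..2*pi})"
      unfolding F_def k0_def sph_e
      by (auto intro!: derivative_eq_intros simp: algebra_simps)
  qed simp
  moreover have "F (2*pi) - F 0 = (pi/2 * sin a * cos a) *\<^sub>R e3"
    by (simp add: F_def algebra_simps)
  ultimately show ?thesis by simp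
qed

lemma outer_int:
  "((\<lambda>a. (pi/2 * sin a * cos a) *\<^sub>R e3) has_integral ((pi/4) *\<^sub>R e3)) {0..pi/2}"
proof -
  define F where "F a = (pi/4 * (sin a)^2) *\<^sub>R e3" for a
  have "((\<lambda>a. (pi/2 * sin a * cos a) *\<^sub>R e3) has_integral (F (pi/2) - F 0)) {0..pi/2}"
  proof (rule fundamental_theorem_of_calculus)
    fix x :: real
    show "(F has_vector_derivative (pi/2 * sin x * cos x) *\<^sub>R e3) (at x within {0..pi/2})"
      unfolding F_def
      by (auto intro!: derivative_eq_intros simp: algebra_simps)
  qed simp
  moreover have "F (pi/2) - F 0 = (pi/4) *\<^sub>R e3"
    by (simp add: F_def)
  ultimately show ?thesis by simp
qed

lemma k0_int: "(k0 has_integral ((pi/4) *\<^sub>R e3)) (cbox (0,0) (pi/2, 2*pi))"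
proof -
  have i: "k0 integrable_on cbox (0,0) (pi/2, 2*pi)"
    by (rule integrable_continuous) (rule k0_cont)
  have "integral (cbox (0,0) (pi/2, 2*pi)) k0 = integral (cbox 0 (pi/2)) (\<lambda>a. integral (cbox 0 (2*pi)) (\<lambda>b. k0 (a,b)))"
    by (rule integral_prod_continuous) (rule k0_cont)
  also have "\<dots> = integral {0..pi/2} (\<lambda>a. (pi/2 * sin a * cos a) *\<^sub>R e3)"
  proof -
    have e: "integral {0..2*pi} (\<lambda>b. k0 (a,b)) = (pi/2 * sin a * cos a) *\<^sub>R e3" for a
      by (rule integral_unique[OF inner_int])
    show ?thesis by (simp only: e cbox_interval)
  qed
  also have "\<dots> = (pi/4) *\<^sub>R e3"
    using outer_int by (rule integral_unique)
  finally show ?thesis using i by (simp add: has_integral_integral)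
qed

lemma cos_nonneg_iff:
  assumes "0 \<le> a" "a \<le> pi"
  shows "0 \<le> cos a \<longleftrightarrow> a \<le> pi/2"
proof
  assume "a \<le> pi/2" then show "0 \<le> cos a" using assms by (intro cos_ge_zero) auto
next
  assume c: "0 \<le> cos a"
  show "a \<le> pi/2"
  proof (rule ccontr)
    assume "\<not> a \<le> pi/2"
    then have "0 < cos (pi - a)" using assms by (intro cos_gt_zero_pi) auto
    then show False using c by simp
  qed
qed

lemma g0_int:
  "((\<lambda>(a,b). if 0 \<le> cos a then (sin a / 4) *\<^sub>R sph a b else 0) has_integral ((pi/4) *\<^sub>R e3))
     (cbox (0,0) (pi, 2*pi))"
proof -
  have "((\<lambda>x. if x \<in> cbox (0,0) (pi/2, 2*pi) then k0 x else 0) has_integral ((pi/4) *\<^sub>R e3)) (cbox (0,0) (pi, 2*pi))"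
    by (rule has_integral_restrict_closed_subinterval[OF k0_int]) (auto simp: cbox_Pair_eq)
  then show ?thesis
  proof (rule has_integral_eq[rotated])
    fix x :: "real \<times> real" assume x: "x \<in> cbox (0,0) (pi, 2*pi)"
    obtain a b where ab: "x = (a,b)" by (cases x)
    have a: "0 \<le> a" "a \<le> pi" "0 \<le> b" "b \<le> 2*pi" using x ab by (auto simp: cbox_Pair_eq)
    show "(if x \<in> cbox (0,0) (pi/2, 2*pi) then k0 x else 0) = (case x of (a,b) \<Rightarrow> if 0 \<le> cos a then (sin a / 4) *\<^sub>R sph a b else 0)"
      using a cos_nonneg_iff[OF a(1,2)] unfolding ab by (auto simp: cbox_Pair_eq k0_def)
  qed
qed

lemma K_val: "integral UNIV (Gq (mat 1) e3) = (pi/4) *\<^sub>R e3"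
proof -
  have 1: "((\<lambda>(a,b). if 0 \<le> sph a b \<bullet> e3 then (sin a / (4 * (sph a b \<bullet> (mat 1 *v sph a b))^2)) *\<^sub>R sph a b else 0)
          has_integral integral UNIV (Gq (mat 1) e3)) (cbox (0,0) (pi, 2*pi))"
    by (rule polar_Gq[OF _ G0_int]) simp
  have 2: "(\<lambda>(a,b). if 0 \<le> sph a b \<bullet> e3 then (sin a / (4 * (sph a b \<bullet> (mat 1 *v sph a b))^2)) *\<^sub>R sph a b else 0)
     = (\<lambda>(a,b). if 0 \<le> cos a then (sin a / 4) *\<^sub>R sph a b else 0)"
    by (auto simp: fun_eq_iff sph_inner_self) (auto simp: sph_def vector_def)
  have "((\<lambda>(a,b). if 0 \<le> cos a then (sin a / 4) *\<^sub>R sph a b else 0)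
          has_integral integral UNIV (Gq (mat 1) e3)) (cbox (0,0) (pi, 2*pi))"
    using 1 unfolding 2 .
  then show ?thesis using g0_int by (rule has_integral_unique)
qed

(* ---- part J ---- *)

lemma diag_inner_sym: "(diag3 a *v z) \<bullet> v = z \<bullet> (diag3 a *v v)"
  by (simp add: diag3_mulv inner_vec_def sum_3 algebra_simps)

theorem theorem1:
  fixes t v :: "real^3"
  assumes "t $ 1 * t $ 2 * t $ 3 \<noteq> 0"
      and "v \<noteq> 0"
  shows "(sph_integrand
            (\<lambda>n. (1 / (n \<bullet> (matrix_inv (diag3 t ** diag3 t) *v n)) ^ 2) *\<^sub>R n)
            {n. n \<bullet> v \<ge> 0}
          has_integral
            ((pi * \<bar>det (diag3 t)\<bar> / norm (diag3 t *v v)) *\<^sub>R ((diag3 t ** diag3 t) *v v)))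
         (cbox (0, 0) (pi, 2 * pi))"
proof -
  define T where "T = diag3 t"
  define Q where "Q = matrix_inv (diag3 t ** diag3 t)"
  have tnz: "t$1 \<noteq> 0" "t$2 \<noteq> 0" "t$3 \<noteq> 0" using assms(1) by auto
  have tnz': "\<forall>i. t$i \<noteq> 0" using tnz by (simp add: forall_3)
  have Qd: "Q = diag3 (\<chi> i. 1 / (t$i * t$i))"
  proof -
    have "\<forall>i. (\<chi> i. t$i * t$i) $ i \<noteq> 0" using tnz' by simp
    then show ?thesis unfolding Q_def diag3_mult by (subst matrix_inv_diag3) auto
  qed
  have Qpos: "0 < x \<bullet> (Q *v x)" if "x \<noteq> 0" for x
  proof -
    have eq: "x \<bullet> (Q *v x) = (x$1)^2 / (t$1)^2 + (x$2)^2 / (t$2)^2 + (x$3)^2 / (t$3)^2"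
      by (simp add: Qd diag3_mulv inner_vec_def sum_3 power2_eq_square)
    have "x$1 \<noteq> 0 \<or> x$2 \<noteq> 0 \<or> x$3 \<noteq> 0" using that by (auto simp: vec_eq_iff forall_3)
    moreover have "0 \<le> (x$1)^2 / (t$1)^2" "0 \<le> (x$2)^2 / (t$2)^2" "0 \<le> (x$3)^2 / (t$3)^2" by simp_all
    moreover have p: "x$i \<noteq> 0 \<Longrightarrow> 0 < (x$i)^2 / (t$i)^2" for i using tnz' by simp
    ultimately show ?thesis unfolding eq using p[of 1] p[of 2] p[of 3] by linarith
  qed
  have Tquad: "(T *v z) \<bullet> (Q *v (T *v z)) = z \<bullet> z" for z
    using tnz by (simp add: T_def Qd diag3_mulv inner_vec_def sum_3 field_simps)
  define w where "w = T *v v"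
  have wnz: "w \<noteq> 0"
  proof
    assume "w = 0"
    then have "t$i * v$i = 0" for i by (simp add: w_def T_def diag3_mulv vec_eq_iff)
    then have "v = 0" using tnz' by (simp add: vec_eq_iff)
    then show False using assms(2) by simp
  qed
  define uh where "uh = (1 / norm w) *\<^sub>R w"
  have nuh: "norm uh = 1" using wnz by (simp add: uh_def)
  have ne3: "norm e3 = 1" by (simp add: e3_def)
  define u where "u = uh - e3"
  have hu1: "hh u uh = e3" unfolding u_def by (rule hh_swap[OF nuh ne3])
  have hu2: "hh u e3 = uh" using hu1 hh_invol by metis
  define L where "L y = T *v hh u y" for y
  have linL: "linear L"
    unfolding L_def using hh_linear linear_compose[of "hh u" "\<lambda>x. T *v x"]
    by (simp add: o_def)
  have blL: "bounded_linear L" using linL linear_conv_bounded_linear by blast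
  have detL: "\<bar>det (matrix L)\<bar> = \<bar>det T\<bar>"
  proof -
    have "L = (\<lambda>x. T *v x) \<circ> hh u" by (simp add: L_def fun_eq_iff)
    then have "matrix L = matrix ((\<lambda>x. T *v x) \<circ> hh u)" by simp
    also have "\<dots> = T ** matrix (hh u)" using hh_linear by (simp add: matrix_compose)
    finally show ?thesis using hh_det by (simp add: det_mul abs_mult)
  qed
  have surjL: "L ` UNIV = UNIV"
  proof -
    have "x \<in> range L" for x
    proof -
      have "T *v (diag3 (\<chi> i. 1 / t$i) *v x) = x"
        using tnz' by (simp add: T_def matrix_vector_mul_assoc diag3_mult diag3_one)
      then have "L (hh u (diag3 (\<chi> i. 1 / t$i) *v x)) = x" by (simp add: L_def hh_invol)
      then show ?thesis by (metis rangeI)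
    qed
    then show ?thesis by auto
  qed
  define K where "K = (pi/4) *\<^sub>R e3"
  have G0i: "Gq (mat 1) e3 integrable_on UNIV" using G0_int set_lebesgue_integral_eq_integral(1) by blast
  have pt: "\<bar>det (matrix L)\<bar> *\<^sub>R Gq Q v (L y) = \<bar>det T\<bar> *\<^sub>R L (Gq (mat 1) e3 y)" for y
  proof -
    have i1: "L y \<bullet> v = norm w * (y \<bullet> e3)"
    proof -
      have "L y \<bullet> v = hh u y \<bullet> w" by (simp add: L_def T_def w_def diag_inner_sym)
      also have "\<dots> = y \<bullet> hh u w" by (rule hh_sym)
      also have "w = norm w *\<^sub>R uh" using wnz by (simp add: uh_def)
      also have "hh u (norm w *\<^sub>R uh) = norm w *\<^sub>R e3"
        using hu1 linear_cmul[OF hh_linear] by metis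
      finally show ?thesis by simp
    qed
    have i2: "L y \<bullet> (Q *v L y) = y \<bullet> (mat 1 *v y)"
      by (simp add: L_def Tquad hh_inner)
    have "0 \<le> L y \<bullet> v \<longleftrightarrow> 0 \<le> y \<bullet> e3" using wnz by (simp add: i1 zero_le_mult_iff)
    then have "Gq Q v (L y) = L (Gq (mat 1) e3 y)"
      unfolding Gq_def i2 using linear_0[OF linL] by auto
    then show ?thesis using detL by simp
  qed
  have lhs: "(\<lambda>y. \<bar>det (matrix L)\<bar> *\<^sub>R Gq Q v (L y)) absolutely_integrable_on UNIV \<and>
        integral UNIV (\<lambda>y. \<bar>det (matrix L)\<bar> *\<^sub>R Gq Q v (L y)) = \<bar>det T\<bar> *\<^sub>R L K"
  proof -
    have bl: "bounded_linear (\<lambda>z. \<bar>det T\<bar> *\<^sub>R L z)"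
      using blL by (intro bounded_linear_compose[OF bounded_linear_scaleR_right]) 
    have "((\<lambda>z. \<bar>det T\<bar> *\<^sub>R L z) \<circ> Gq (mat 1) e3) absolutely_integrable_on UNIV"
      by (rule absolutely_integrable_linear[OF G0_int bl])
    moreover have "integral UNIV ((\<lambda>z. \<bar>det T\<bar> *\<^sub>R L z) \<circ> Gq (mat 1) e3) = \<bar>det T\<bar> *\<^sub>R L K"
      using integral_linear[OF G0i bl] K_val unfolding K_def by simp
    ultimately show ?thesis unfolding pt by (simp add: o_def)
  qed
  have cv: "(\<lambda>y. \<bar>det (matrix L)\<bar> *\<^sub>R Gq Q v (L y)) absolutely_integrable_on UNIV \<and>
        integral UNIV (\<lambda>y. \<bar>det (matrix L)\<bar> *\<^sub>R Gq Q v (L y)) = \<bar>det T\<bar> *\<^sub>R L K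
      \<longleftrightarrow> Gq Q v absolutely_integrable_on L ` UNIV \<and> integral (L ` UNIV) (Gq Q v) = \<bar>det T\<bar> *\<^sub>R L K"
    by (rule has_absolute_integral_change_of_variables_linear[OF linL])
  have Gv: "Gq Q v absolutely_integrable_on UNIV" "integral UNIV (Gq Q v) = \<bar>det T\<bar> *\<^sub>R L K"
    using cv lhs surjL by auto
  have P: "((\<lambda>(a,b). if 0 \<le> sph a b \<bullet> v then (sin a / (4 * (sph a b \<bullet> (Q *v sph a b))^2)) *\<^sub>R sph a b else 0)
          has_integral integral UNIV (Gq Q v)) (cbox (0,0) (pi, 2*pi))"
    by (rule polar_Gq[OF Qpos Gv(1)])
  have P4: "((\<lambda>x. 4 *\<^sub>R (case x of (a,b) \<Rightarrow> if 0 \<le> sph a b \<bullet> v then (sin a / (4 * (sph a b \<bullet> (Q *v sph a b))^2)) *\<^sub>R sph a b else 0))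
          has_integral 4 *\<^sub>R (\<bar>det T\<bar> *\<^sub>R L K)) (cbox (0,0) (pi, 2*pi))"
    using has_integral_cmul[OF P, of 4] Gv(2) by simp
  have val: "4 *\<^sub>R (\<bar>det T\<bar> *\<^sub>R L K) = (pi * \<bar>det T\<bar> / norm w) *\<^sub>R ((T ** T) *v v)"
  proof -
    have "L K = (pi/4) *\<^sub>R L e3" unfolding K_def by (rule linear_cmul[OF linL])
    also have "L e3 = (1 / norm w) *\<^sub>R (T *v w)"
      by (simp add: L_def hu2 uh_def matrix_vector_mult_scaleR)
    also have "T *v w = (T ** T) *v v" by (simp add: w_def matrix_vector_mul_assoc)
    finally show ?thesis by (simp add: scaleR_scaleR)
  qed
  have feq: "(\<lambda>x. 4 *\<^sub>R (case x of (a,b) \<Rightarrow> if 0 \<le> sph a b \<bullet> v then (sin a / (4 * (sph a b \<bullet> (Q *v sph a b))^2)) *\<^sub>R sph a b else 0))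
        = sph_integrand (\<lambda>n. (1 / (n \<bullet> (Q *v n))^2) *\<^sub>R n) {n. n \<bullet> v \<ge> 0}"
  proof (rule ext)
    fix x :: "real \<times> real"
    obtain a b where ab: "x = (a,b)" by (cases x)
    show "4 *\<^sub>R (case x of (a,b) \<Rightarrow> if 0 \<le> sph a b \<bullet> v then (sin a / (4 * (sph a b \<bullet> (Q *v sph a b))^2)) *\<^sub>R sph a b else 0)
        = sph_integrand (\<lambda>n. (1 / (n \<bullet> (Q *v n))^2) *\<^sub>R n) {n. n \<bullet> v \<ge> 0} x"
      unfolding ab sph_integrand_def by (simp add: scaleR_scaleR)
  qed
  have final: "(sph_integrand (\<lambda>n. (1 / (n \<bullet> (Q *v n))^2) *\<^sub>R n) {n. n \<bullet> v \<ge> 0}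
      has_integral ((pi * \<bar>det T\<bar> / norm w) *\<^sub>R ((T ** T) *v v))) (cbox (0,0) (pi, 2*pi))"
    using P4 unfolding feq val .
  then show ?thesis by (simp add: Q_def T_def w_def)
qed


end
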